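(* Let $\sigma,\eta>0$ and $\mathscr{C}$ be a family of balls as in the context. There exists a constant $C=C(\mathscr{C})>0$ such that $|B|^{1/3}\le C(1+|x_B|)$ for all $B\in\mathscr{C}$.
   Context: Cover: for constants $\sigma,\eta>0$, $\mathscr{C}$ is a family of closed balls in $\mathbb{R}^3$ with $\bigcup_{B\in\mathscr{C}}B=\mathbb{R}^3$ and $|B|\geq 4\pi/3$ for all $B\in\mathscr{C}$, such that (i) each ball in $\mathscr{C}$ intersects at most $\sigma$ balls in $\mathscr{C}$, and (ii) if $B,B'\in\mathscr{C}$ intersect then $\eta^{-1}\le |B|^{1/3}/|B'|^{1/3}\le\eta$. Here $|B|$ is the volume and $x_B$ the center of $B$. *)

theory Defs
  imports "HOL-Analysis.Analysis"
begin

text \<open>A closed ball in R^3 is represented by its center and radius (radius > 0);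
  the ball itself is cball x r, its volume is its Lebesgue measure.\<close>

definition ball_vol :: "(real^3) \<times> real \<Rightarrow> real" where
  "ball_vol b = measure lebesgue (cball (fst b) (snd b))"

definition ball_set :: "(real^3) \<times> real \<Rightarrow> (real^3) set" where
  "ball_set b = cball (fst b) (snd b)"

definition is_cover :: "real \<Rightarrow> real \<Rightarrow> ((real^3) \<times> real) set \<Rightarrow> bool" where
  "is_cover \<sigma> \<eta> \<C> \<longleftrightarrow>
     (\<forall>b\<in>\<C>. snd b > 0) \<and>
     (\<Union>b\<in>\<C>. ball_set b) = UNIV \<and>
     (\<forall>b\<in>\<C>. ball_vol b \<ge> 4 * pi / 3) \<and>
     (\<forall>b\<in>\<C>. finite {b'\<in>\<C>. b' \<noteq> b \<and> ball_set b \<inter> ball_set b' \<noteq> {}} \<and>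
              real (card {b'\<in>\<C>. b' \<noteq> b \<and> ball_set b \<inter> ball_set b' \<noteq> {}}) \<le> \<sigma>) \<and>
     (\<forall>b\<in>\<C>. \<forall>b'\<in>\<C>. ball_set b \<inter> ball_set b' \<noteq> {} \<longrightarrow>
        inverse \<eta> \<le> ball_vol b powr (1/3) / ball_vol b' powr (1/3) \<and>
        ball_vol b powr (1/3) / ball_vol b' powr (1/3) \<le> \<eta>)"

end

theory Submission
  imports Defs
begin

lemma vol_eq: "r \<ge> 0 \<Longrightarrow> ball_vol (x, r) = 4 / 3 * pi * r ^ 3"
proof -
  assume r: "r \<ge> 0"
  have "measure lebesgue (cball x r) = measure lborel (cball x r)"
    by (simp add: measure_completion)
  also have "\<dots> = unit_ball_vol (DIM(real^3)) * r ^ DIM(real^3)"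
    using content_cball[OF r, of x] by simp
  finally show ?thesis unfolding ball_vol_def by (simp add: unit_ball_vol_3)
qed

lemma vol_le: "r \<ge> 0 \<Longrightarrow> ball_vol (x, r) powr (1/3) \<le> 2 * r"
proof -
  assume r: "r \<ge> 0"
  have "r ^ 3 \<ge> 0" using r by simp
  hence "4 / 3 * pi * r ^ 3 \<le> 8 * r ^ 3" using pi_less_4
    by (intro mult_right_mono) auto
  hence "ball_vol (x, r) \<le> (2 * r) ^ 3"
    using vol_eq[OF r, of x] by (simp add: power_mult_distrib)
  moreover have "ball_vol (x, r) \<ge> 0" unfolding ball_vol_def by simp
  ultimately have "ball_vol (x, r) powr (1/3) \<le> ((2 * r) ^ 3) powr (1/3)"
    by (intro powr_mono2) auto
  also have "\<dots> = 2 * r"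
  proof -
    have "((2 * r) ^ 3) powr (1/3) = ((2 * r) powr 3) powr (1/3)"
    proof (cases "r = 0")
      case False
      hence "2 * r > 0" using r by simp
      from powr_realpow[OF this, of 3] show ?thesis by simp
    qed simp
    also have "\<dots> = 2 * r" using r by (subst powr_powr) simp
    finally show ?thesis .
  qed
  finally show ?thesis .
qed

theorem corollary3p3:
  fixes \<sigma> \<eta> :: real and \<C> :: "((real^3) \<times> real) set"
  assumes "\<sigma> > 0" and "\<eta> > 0" and "is_cover \<sigma> \<eta> \<C>"
  shows "\<exists>C>0. \<forall>b\<in>\<C>. ball_vol b powr (1/3) \<le> C * (1 + norm (fst b))"
proof -
  note cov = assms(3)[unfolded is_cover_def]
  have "(0::real^3) \<in> (\<Union>b\<in>\<C>. ball_set b)" using cov by simp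
  then obtain b0 where b0: "b0 \<in> \<C>" "0 \<in> ball_set b0" by auto
  have v0: "ball_vol b0 > 0" using cov b0 pi_gt_zero
    by (smt (verit, ccfv_SIG) divide_pos_pos)
  define C where "C = max 2 (\<eta> * ball_vol b0 powr (1/3))"
  have "C > 0" unfolding C_def by simp
  moreover have "ball_vol b powr (1/3) \<le> C * (1 + norm (fst b))" if b: "b \<in> \<C>" for b
  proof (cases "norm (fst b) \<le> snd b")
    case True
    hence "0 \<in> ball_set b" unfolding ball_set_def by (simp add: dist_norm)
    hence "ball_set b \<inter> ball_set b0 \<noteq> {}" using b0 by auto
    hence "ball_vol b powr (1/3) / ball_vol b0 powr (1/3) \<le> \<eta>" using cov b b0 by blast
    hence "ball_vol b powr (1/3) \<le> \<eta> * ball_vol b0 powr (1/3)"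
      using v0 by (simp add: divide_le_eq)
    also have "\<dots> \<le> C * 1" unfolding C_def by simp
    also have "\<dots> \<le> C * (1 + norm (fst b))" using \<open>C > 0\<close> by simp
    finally show ?thesis .
  next
    case False
    have r: "snd b \<ge> 0" using cov b by (simp add: less_imp_le)
    have "ball_vol b powr (1/3) \<le> 2 * snd b" using vol_le[OF r, of "fst b"] by simp
    also have "\<dots> \<le> 2 * (1 + norm (fst b))" using False by simp
    also have "\<dots> \<le> C * (1 + norm (fst b))" unfolding C_def
      by (intro mult_right_mono) auto
    finally show ?thesis .
  qed
  ultimately show ?thesis by blast
qed

end
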